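(* The centre of $\Omega^1_{\mathcal{D}}(\mathcal{B})$ is $\{0\}$.
   Context: $\mathcal{B}=\mathcal{O}(S^2_q)\subset\mathcal{A}=\mathcal{O}(SU_q(2))$ is the Podle\'{s} sphere, $q\in(0,1]$, and $\Omega^1_{\mathcal{D}}(\mathcal{B})=\mathrm{span}\{a[\mathcal{D},b]\}$ are the one-forms of the Dabrowski--Sitarz spectral triple, identified with off-diagonal $2\times2$ matrices with entries in $\mathcal{A}$, so $\Omega^1_{\mathcal{D}}(\mathcal{B})\subset\mathcal{A}^{\oplus2}$. The centre of a $\mathcal{B}$-bimodule $M$ is $\{x\in M: bx=xb\ \forall b\in\mathcal{B}\}$. It is used that the commutant of $\mathcal{B}$ in $\mathcal{A}$ consists only of scalar multiples of the identity, while $\Omega^1_{\mathcal{D}}(\mathcal{B})$ does not intersect the scalars. *)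

theory Defs
  imports Complex_Main
begin

text \<open>Complex algebras are modelled as a ring 'a together with a central embedding
  of the complex scalars.\<close>

definition is_scalar_embedding :: "(complex \<Rightarrow> 'a::ring_1) \<Rightarrow> bool" where
  "is_scalar_embedding sc \<longleftrightarrow>
     (\<forall>z w. sc (z + w) = sc z + sc w) \<and> (\<forall>z w. sc (z * w) = sc z * sc w) \<and> sc 1 = 1 \<and>
     (\<forall>z x. sc z * x = x * sc z)"

definition clinear_map :: "(complex \<Rightarrow> 'a::ring_1) \<Rightarrow> ('a \<Rightarrow> 'a) \<Rightarrow> bool" where
  "clinear_map sc L \<longleftrightarrow> (\<forall>x y. L (x + y) = L x + L y) \<and> (\<forall>z x. L (sc z * x) = sc z * L x)"

definition is_lin_basis :: "(complex \<Rightarrow> 'a::ring_1) \<Rightarrow> ('i \<Rightarrow> 'a) \<Rightarrow> bool" where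
  "is_lin_basis sc e \<longleftrightarrow>
     (\<forall>x. \<exists>!f::'i \<Rightarrow> complex. finite {i. f i \<noteq> 0} \<and> x = (\<Sum>i\<in>{i. f i \<noteq> 0}. sc (f i) * e i))"

definition pbw_mon :: "'a::ring_1 \<Rightarrow> 'a \<Rightarrow> 'a \<Rightarrow> 'a \<Rightarrow> (nat \<times> nat \<times> nat) + (nat \<times> nat \<times> nat) \<Rightarrow> 'a" where
  "pbw_mon a b c d i = (case i of
      Inl (k, m, n) \<Rightarrow> a ^ k * b ^ m * c ^ n
    | Inr (k, m, n) \<Rightarrow> d ^ Suc k * b ^ m * c ^ n)"

text \<open>Defining relations of O(SU_q(2)) (= O(SL_q(2)) as an algebra), generators a b c d.\<close>
definition suq2_rels :: "real \<Rightarrow> (complex \<Rightarrow> 'a::ring_1) \<Rightarrow> 'a \<Rightarrow> 'a \<Rightarrow> 'a \<Rightarrow> 'a \<Rightarrow> bool" where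
  "suq2_rels q sc a b c d \<longleftrightarrow>
     b * a = sc (of_real q) * (a * b) \<and> c * a = sc (of_real q) * (a * c) \<and>
     d * b = sc (of_real q) * (b * d) \<and> d * c = sc (of_real q) * (c * d) \<and>
     b * c = c * b \<and>
     a * d - d * a = sc (of_real (inverse q - q)) * (b * c) \<and>
     a * d - sc (of_real (inverse q)) * (b * c) = 1"

text \<open>'a (with sc) is the algebra O(SU_q(2)) with generators a b c d: the relations hold
  and the PBW monomials form a basis (this characterises the algebra up to isomorphism).\<close>
definition is_Oq_SU2 :: "real \<Rightarrow> (complex \<Rightarrow> 'a::ring_1) \<Rightarrow> 'a \<Rightarrow> 'a \<Rightarrow> 'a \<Rightarrow> 'a \<Rightarrow> bool" where
  "is_Oq_SU2 q sc a b c d \<longleftrightarrow>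
     is_scalar_embedding sc \<and> suq2_rels q sc a b c d \<and> is_lin_basis sc (pbw_mon a b c d)"

definition is_K_action :: "real \<Rightarrow> (complex \<Rightarrow> 'a::ring_1) \<Rightarrow> 'a \<Rightarrow> 'a \<Rightarrow> 'a \<Rightarrow> 'a \<Rightarrow> ('a \<Rightarrow> 'a) \<Rightarrow> bool" where
  "is_K_action s sc a b c d K \<longleftrightarrow>
     clinear_map sc K \<and> (\<forall>x y. K (x * y) = K x * K y) \<and> K 1 = 1 \<and>
     K a = sc (of_real s) * a \<and> K b = sc (of_real (inverse s)) * b \<and>
     K c = sc (of_real s) * c \<and> K d = sc (of_real (inverse s)) * d"

definition twisted_deriv :: "(complex \<Rightarrow> 'a::ring_1) \<Rightarrow> ('a \<Rightarrow> 'a) \<Rightarrow> ('a \<Rightarrow> 'a) \<Rightarrow> ('a \<Rightarrow> 'a) \<Rightarrow> bool" where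
  "twisted_deriv sc K Ki D \<longleftrightarrow> clinear_map sc D \<and> (\<forall>x y. D (x * y) = D x * K y + Ki x * D y)"

text \<open>Left actions of E and F of U_q(su(2)) (the operators partial_e, partial_f).\<close>
definition is_partial_e :: "(complex \<Rightarrow> 'a::ring_1) \<Rightarrow> 'a \<Rightarrow> 'a \<Rightarrow> 'a \<Rightarrow> 'a \<Rightarrow> ('a \<Rightarrow> 'a) \<Rightarrow> ('a \<Rightarrow> 'a) \<Rightarrow> ('a \<Rightarrow> 'a) \<Rightarrow> bool" where
  "is_partial_e sc a b c d K Ki D \<longleftrightarrow> twisted_deriv sc K Ki D \<and> D a = b \<and> D b = 0 \<and> D c = d \<and> D d = 0"

definition is_partial_f :: "(complex \<Rightarrow> 'a::ring_1) \<Rightarrow> 'a \<Rightarrow> 'a \<Rightarrow> 'a \<Rightarrow> 'a \<Rightarrow> ('a \<Rightarrow> 'a) \<Rightarrow> ('a \<Rightarrow> 'a) \<Rightarrow> ('a \<Rightarrow> 'a) \<Rightarrow> bool" where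
  "is_partial_f sc a b c d K Ki D \<longleftrightarrow> twisted_deriv sc K Ki D \<and> D a = 0 \<and> D b = a \<and> D c = 0 \<and> D d = c"

inductive_set subalg_gen :: "(complex \<Rightarrow> 'a::ring_1) \<Rightarrow> 'a set \<Rightarrow> 'a set" for sc G where
  scal: "sc z \<in> subalg_gen sc G"
| gen: "g \<in> G \<Longrightarrow> g \<in> subalg_gen sc G"
| add: "x \<in> subalg_gen sc G \<Longrightarrow> y \<in> subalg_gen sc G \<Longrightarrow> x + y \<in> subalg_gen sc G"
| mult: "x \<in> subalg_gen sc G \<Longrightarrow> y \<in> subalg_gen sc G \<Longrightarrow> x * y \<in> subalg_gen sc G"

text \<open>Standard Podles sphere: generated by ab, bc, cd (scalar multiples of a c^*, c c^*, c a^*).\<close>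
definition podles :: "(complex \<Rightarrow> 'a::ring_1) \<Rightarrow> 'a \<Rightarrow> 'a \<Rightarrow> 'a \<Rightarrow> 'a \<Rightarrow> 'a set" where
  "podles sc a b c d = subalg_gen sc {a * b, b * c, c * d}"

text \<open>One-forms span{x [D,y]}, with [D,y] identified with the off-diagonal pair
  (partial_e y, partial_f y) in A (+) A.\<close>
definition dirac_one_forms :: "'a::ring_1 set \<Rightarrow> ('a \<Rightarrow> 'a) \<Rightarrow> ('a \<Rightarrow> 'a) \<Rightarrow> ('a \<times> 'a) set" where
  "dirac_one_forms B De Df =
     {((\<Sum>(x, y)\<leftarrow>ps. x * De y), (\<Sum>(x, y)\<leftarrow>ps. x * Df y)) | ps. set ps \<subseteq> B \<times> B}"

definition bimod_centre :: "'a::ring_1 set \<Rightarrow> ('a \<times> 'a) set \<Rightarrow> ('a \<times> 'a) set" where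
  "bimod_centre B M = {w \<in> M. \<forall>x\<in>B. x * fst w = fst w * x \<and> x * snd w = snd w * x}"

end

theory Submission
  imports Defs
begin


context
  fixes sc :: "complex \<Rightarrow> 'a::ring_1"
  assumes S: "is_scalar_embedding sc"
begin

lemma sc_add: "sc (z + w) = sc z + sc w" using S unfolding is_scalar_embedding_def by blast
lemma sc_mult: "sc (z * w) = sc z * sc w" using S unfolding is_scalar_embedding_def by blast
lemma sc_1: "sc 1 = 1" using S unfolding is_scalar_embedding_def by blast
lemma sc_comm: "sc z * x = x * sc z" using S unfolding is_scalar_embedding_def by blast
lemma sc_0: "sc 0 = 0"
  using sc_add[of 0 0] by simp
lemma sc_diff: "sc (z - w) = sc z - sc w"
  using sc_add[of "z - w" w] by (simp add: algebra_simps)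

lemma scn1: "x * (sc z * y) = sc z * (x * y)"
  by (metis mult.assoc sc_comm)
lemma scn2: "(sc z * x) * y = sc z * (x * y)"
  by (simp add: mult.assoc)
lemma scn3: "sc z * (sc w * x) = sc (z * w) * x"
  by (simp only: sc_mult mult.assoc)
lemma scn4: "sc z * sc w = sc (z * w)" by (simp add: sc_mult)
lemma scn5: "x * sc z = sc z * x" by (simp add: sc_comm)

lemma indep:
  assumes B: "is_lin_basis sc e" and inj: "inj_on h F" and fin: "finite F"
    and sum0: "(\<Sum>i\<in>F. sc (g i) * e (h i)) = 0" and iF: "i \<in> F"
  shows "g i = 0"
proof -
  define G where "G j = (if j \<in> h ` F then g (the_inv_into F h j) else 0)" for j
  have Gh: "G (h i) = g i" if "i \<in> F" for i
    using that inj unfolding G_def by (simp add: the_inv_into_f_f)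
  have ex1: "\<exists>!f. finite {i. f i \<noteq> 0} \<and> (0::'a) = (\<Sum>i\<in>{i. f i \<noteq> 0}. sc (f i) * e i)"
    using B[unfolded is_lin_basis_def, rule_format, of 0] .
  have z: "finite {i. (\<lambda>_. 0::complex) i \<noteq> 0} \<and> (0::'a) = (\<Sum>i\<in>{i. (\<lambda>_. 0::complex) i \<noteq> 0}. sc ((\<lambda>_. 0::complex) i) * e i)"
    by simp
  have sub: "{j. G j \<noteq> 0} \<subseteq> h ` F" unfolding G_def by auto
  have finG: "finite {j. G j \<noteq> 0}" using sub fin finite_subset by blast
  have "(\<Sum>j\<in>{j. G j \<noteq> 0}. sc (G j) * e j) = (\<Sum>j\<in>h ` F. sc (G j) * e j)"
    by (rule sum.mono_neutral_left) (use fin sub sc_0 in auto)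
  also have "\<dots> = (\<Sum>i\<in>F. sc (G (h i)) * e (h i))"
    using inj by (simp add: sum.reindex)
  also have "\<dots> = (\<Sum>i\<in>F. sc (g i) * e (h i))"
    by (rule sum.cong) (simp_all add: Gh)
  also have "\<dots> = 0" by (rule sum0)
  finally have "finite {j. G j \<noteq> 0} \<and> (0::'a) = (\<Sum>j\<in>{j. G j \<noteq> 0}. sc (G j) * e j)"
    using finG by simp
  note G = this
  from ex1 obtain f0 where f0: "\<And>f. finite {i. f i \<noteq> 0} \<and> (0::'a) = (\<Sum>i\<in>{i. f i \<noteq> 0}. sc (f i) * e i) \<Longrightarrow> f = f0"
  proof -
    define P where "P = (\<lambda>f::'b \<Rightarrow> complex. finite {i. f i \<noteq> 0} \<and> (0::'a) = (\<Sum>i\<in>{i. f i \<noteq> 0}. sc (f i) * e i))"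
    have "\<exists>!f. P f" using ex1 unfolding P_def .
    then obtain f0 where "\<And>f. P f \<Longrightarrow> f = f0" by blast
    then show ?thesis unfolding P_def by (rule that)
  qed
  have "(\<lambda>_. 0::complex) = f0" by (rule f0[OF z])
  moreover have "G = f0" by (rule f0[OF G])
  ultimately have "G (h i) = 0" by metis
  then show ?thesis using Gh[OF iF] by simp
qed

lemma one_neq_zero':
  assumes B: "is_lin_basis sc e" shows "(1::'a) \<noteq> 0"
proof
  assume h: "(1::'a) = 0"
  obtain i0 :: 'b where True by simp
  have x: "sc 1 * e i0 = 0" by (metis h mult_1_left mult_zero_left)
  have "(\<lambda>_. 1::complex) i0 = 0"
    by (rule indep[OF B, of id "{i0}"]) (use x in auto)
  then show False by simp
qed

lemma sc_inj0:
  assumes B: "is_lin_basis sc e" and "sc z = 0" shows "z = 0"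
proof (rule ccontr)
  assume "z \<noteq> 0"
  then have "sc z * sc (inverse z) = 1" by (simp add: sc_mult[symmetric] sc_1)
  with assms one_neq_zero'[OF B] show False by simp
qed

end


context
  fixes q :: real and sc :: "complex \<Rightarrow> 'a::ring_1" and a b c d :: 'a
  assumes O: "is_Oq_SU2 q sc a b c d" and q0: "0 < q" and q1: "q < 1"
begin

lemma S: "is_scalar_embedding sc" using O by (simp add: is_Oq_SU2_def)
lemma BAS: "is_lin_basis sc (pbw_mon a b c d)" using O by (simp add: is_Oq_SU2_def)
lemma R: "suq2_rels q sc a b c d" using O by (simp add: is_Oq_SU2_def)

lemmas scn = scn1[OF S] scn2[OF S] scn3[OF S] scn4[OF S]

lemma ba: "b * a = sc (of_real q) * (a * b)" using R by (simp add: suq2_rels_def)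
lemma ca: "c * a = sc (of_real q) * (a * c)" using R by (simp add: suq2_rels_def)
lemma db: "d * b = sc (of_real q) * (b * d)" using R by (simp add: suq2_rels_def)
lemma dc: "d * c = sc (of_real q) * (c * d)" using R by (simp add: suq2_rels_def)
lemma bc: "b * c = c * b" using R by (simp add: suq2_rels_def)

lemma bc_a: "(b * c) * a = sc (of_real (q^2)) * (a * (b * c))"
proof -
  have "(b * c) * a = b * (c * a)" by (simp only: mult.assoc)
  also have "\<dots> = sc (of_real q) * ((b * a) * c)" by (simp only: ca scn1[OF S] mult.assoc)
  also have "\<dots> = sc (of_real q * of_real q) * (a * (b * c))" by (simp only: ba scn2[OF S] scn3[OF S] mult.assoc)
  finally show ?thesis by (simp add: power2_eq_square)
qed

lemma bc_d: "(b * c) * d = sc (of_real (inverse q ^ 2)) * (d * (b * c))"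
proof -
  have "d * (b * c) = (d * b) * c" by (simp only: mult.assoc)
  also have "\<dots> = sc (of_real q) * (b * (d * c))" by (simp only: db scn2[OF S] mult.assoc)
  also have "\<dots> = sc (of_real q * of_real q) * ((b * c) * d)" by (simp only: dc scn1[OF S, of b] scn3[OF S] mult.assoc)
  finally have "sc (of_real (inverse q ^ 2)) * (d * (b * c)) = sc (of_real (inverse q ^ 2) * (of_real q * of_real q)) * ((b * c) * d)"
    by (simp only: scn3[OF S])
  also have "of_real (inverse q ^ 2) * (of_real q * of_real q) = (1::complex)"
    using q0 by (simp add: power2_eq_square field_simps flip: of_real_mult)
  finally show ?thesis by (simp add: sc_1[OF S])
qed

lemma bc_apow: "(b * c) * a ^ k = sc (of_real ((q) ^ (2 * k))) * (a ^ k * (b * c))"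
proof (induction k)
  case 0 then show ?case by (simp add: sc_1[OF S])
next
  case (Suc k)
  have eq: "(q) ^ (2 * k) * (q) ^ 2 = (q) ^ (2 * Suc k)" by (simp add: mult_Suc_right power_add power2_eq_square)
  have "(b * c) * a ^ Suc k = ((b * c) * a ^ k) * a" by (simp only: power_Suc2 mult.assoc)
  also have "\<dots> = (sc (of_real ((q) ^ (2 * k))) * (a ^ k * (b * c))) * a" by (subst Suc.IH) (rule refl)
  also have "\<dots> = sc (of_real ((q) ^ (2 * k))) * (a ^ k * ((b * c) * a))" by (simp only: scn2[OF S] mult.assoc)
  also have "\<dots> = sc (of_real ((q) ^ (2 * k))) * (a ^ k * (sc (of_real ((q) ^ 2)) * (a * (b * c))))" by (simp only: bc_a)
  also have "\<dots> = sc (of_real ((q) ^ (2 * k)) * of_real ((q) ^ 2)) * ((a ^ k * a) * (b * c))"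
    by (simp only: scn1[OF S, of "a ^ k"] scn3[OF S] mult.assoc)
  also have "\<dots> = sc (of_real ((q) ^ (2 * Suc k))) * (a ^ Suc k * (b * c))"
    by (simp only: power_Suc2 eq of_real_mult[symmetric])
  finally show ?case .
qed

lemma bc_dpow: "(b * c) * d ^ k = sc (of_real ((inverse q) ^ (2 * k))) * (d ^ k * (b * c))"
proof (induction k)
  case 0 then show ?case by (simp add: sc_1[OF S])
next
  case (Suc k)
  have eq: "(inverse q) ^ (2 * k) * (inverse q) ^ 2 = (inverse q) ^ (2 * Suc k)" by (simp add: mult_Suc_right power_add power2_eq_square)
  have "(b * c) * d ^ Suc k = ((b * c) * d ^ k) * d" by (simp only: power_Suc2 mult.assoc)
  also have "\<dots> = (sc (of_real ((inverse q) ^ (2 * k))) * (d ^ k * (b * c))) * d" by (subst Suc.IH) (rule refl)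
  also have "\<dots> = sc (of_real ((inverse q) ^ (2 * k))) * (d ^ k * ((b * c) * d))" by (simp only: scn2[OF S] mult.assoc)
  also have "\<dots> = sc (of_real ((inverse q) ^ (2 * k))) * (d ^ k * (sc (of_real ((inverse q) ^ 2)) * (d * (b * c))))" by (simp only: bc_d)
  also have "\<dots> = sc (of_real ((inverse q) ^ (2 * k)) * of_real ((inverse q) ^ 2)) * ((d ^ k * d) * (b * c))"
    by (simp only: scn1[OF S, of "d ^ k"] scn3[OF S] mult.assoc)
  also have "\<dots> = sc (of_real ((inverse q) ^ (2 * Suc k))) * (d ^ Suc k * (b * c))"
    by (simp only: power_Suc2 eq of_real_mult[symmetric])
  finally show ?case .
qed

lemma b_cpow: "c ^ n * b = b * c ^ n"
  using power_commuting_commutes[of c b n] bc by simp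
lemma c_bpow: "b ^ m * c = c * b ^ m"
  using power_commuting_commutes[of b c m] bc by simp

lemma bmcn_bc: "b ^ m * c ^ n * (b * c) = b ^ Suc m * c ^ Suc n"
proof -
  have "b ^ m * c ^ n * (b * c) = b ^ m * (c ^ n * b) * c" by (simp add: mult.assoc)
  also have "\<dots> = b ^ m * (b * c ^ n) * c" by (simp only: b_cpow)
  also have "\<dots> = (b ^ m * b) * (c ^ n * c)" by (simp only: mult.assoc)
  also have "\<dots> = b ^ Suc m * c ^ Suc n" by (simp only: power_Suc2)
  finally show ?thesis .
qed

lemma bc_bmcn: "(b * c) * (b ^ m * c ^ n) = b ^ m * c ^ n * (b * c)"
proof -
  have "(b * c) * (b ^ m * c ^ n) = b * (c * b ^ m) * c ^ n" by (simp add: mult.assoc)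
  also have "\<dots> = b ^ Suc m * c ^ Suc n" by (simp add: c_bpow[symmetric] mult.assoc power_Suc power_Suc2)
  finally show ?thesis by (simp add: bmcn_bc)
qed


lemma comm_sum:
  fixes L x :: 'a and e :: "'i \<Rightarrow> 'a" and h :: "'i \<Rightarrow> 'i"
  assumes B: "is_lin_basis sc e" and fin: "finite F" and inj: "inj_on h F"
    and al: "\<And>i. i \<in> F \<Longrightarrow> L * e i = sc (\<alpha> i) * e (h i)"
    and be: "\<And>i. i \<in> F \<Longrightarrow> e i * L = sc (\<beta> i) * e (h i)"
    and x: "x = (\<Sum>i\<in>F. sc (f i) * e i)" and com: "L * x = x * L"
    and iF: "i \<in> F"
  shows "f i * \<alpha> i - f i * \<beta> i = 0"
proof -
  have 1: "L * x = (\<Sum>i\<in>F. sc (f i * \<alpha> i) * e (h i))"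
    unfolding x sum_distrib_left
    by (rule sum.cong) (simp_all add: scn1[OF S, of L] scn3[OF S] al)
  have 2: "x * L = (\<Sum>i\<in>F. sc (f i * \<beta> i) * e (h i))"
    unfolding x sum_distrib_right
    by (rule sum.cong) (simp_all add: scn2[OF S] scn3[OF S] be)
  have "(\<Sum>i\<in>F. sc (f i * \<alpha> i - f i * \<beta> i) * e (h i)) = L * x - x * L"
    unfolding 1 2 sum_subtractf[symmetric]
    by (rule sum.cong) (simp_all add: sc_diff[OF S] left_diff_distrib)
  also have "\<dots> = 0" using com by simp
  finally show ?thesis by (rule indep[OF S B inj fin _ iF])
qed

definition lam1 :: "(nat \<times> nat \<times> nat) + (nat \<times> nat \<times> nat) \<Rightarrow> complex" where
  "lam1 i = (case i of Inl (k, m, n) \<Rightarrow> of_real (q ^ (2 * k)) | Inr (k, m, n) \<Rightarrow> of_real (inverse q ^ (2 * Suc k)))"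
definition sh1 :: "(nat \<times> nat \<times> nat) + (nat \<times> nat \<times> nat) \<Rightarrow> (nat \<times> nat \<times> nat) + (nat \<times> nat \<times> nat)" where
  "sh1 i = (case i of Inl (k, m, n) \<Rightarrow> Inl (k, Suc m, Suc n) | Inr (k, m, n) \<Rightarrow> Inr (k, Suc m, Suc n))"
definition sh2 :: "(nat \<times> nat \<times> nat) + (nat \<times> nat \<times> nat) \<Rightarrow> (nat \<times> nat \<times> nat) + (nat \<times> nat \<times> nat)" where
  "sh2 i = (case i of Inl (k, m, n) \<Rightarrow> Inl (Suc k, Suc m, n) | Inr t \<Rightarrow> Inr t)"

lemma inj_sh1: "inj sh1"
  unfolding inj_def sh1_def by (auto split: sum.splits prod.splits)
lemma inj_sh2: "inj sh2"
  unfolding inj_def sh2_def by (auto split: sum.splits prod.splits)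

lemma e_bc: "pbw_mon a b c d i * (b * c) = pbw_mon a b c d (sh1 i)"
proof (cases i)
  case (Inl t)
  obtain k m n where t: "t = (k, m, n)" by (cases t) auto
  have "a ^ k * b ^ m * c ^ n * (b * c) = a ^ k * (b ^ m * c ^ n * (b * c))" by (simp only: mult.assoc)
  also have "\<dots> = a ^ k * b ^ Suc m * c ^ Suc n" by (simp only: bmcn_bc[symmetric] mult.assoc)
  finally show ?thesis by (simp add: pbw_mon_def sh1_def Inl t)
next
  case (Inr t)
  obtain k m n where t: "t = (k, m, n)" by (cases t) auto
  have "d ^ Suc k * b ^ m * c ^ n * (b * c) = d ^ Suc k * (b ^ m * c ^ n * (b * c))" by (simp only: mult.assoc)
  also have "\<dots> = d ^ Suc k * b ^ Suc m * c ^ Suc n" by (simp only: bmcn_bc[symmetric] mult.assoc)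
  finally show ?thesis by (simp add: pbw_mon_def sh1_def Inr t)
qed

lemma bc_e: "(b * c) * pbw_mon a b c d i = sc (lam1 i) * pbw_mon a b c d (sh1 i)"
proof (cases i)
  case (Inl t)
  obtain k m n where t: "t = (k, m, n)" by (cases t) auto
  have "(b * c) * (a ^ k * b ^ m * c ^ n) = ((b * c) * a ^ k) * (b ^ m * c ^ n)" by (simp only: mult.assoc)
  also have "\<dots> = sc (of_real (q ^ (2 * k))) * (a ^ k * ((b * c) * (b ^ m * c ^ n)))"
    by (subst bc_apow) (simp only: scn2[OF S] mult.assoc)
  also have "\<dots> = sc (of_real (q ^ (2 * k))) * (a ^ k * b ^ m * c ^ n * (b * c))"
    by (subst bc_bmcn) (simp only: mult.assoc)
  also have "\<dots> = sc (lam1 i) * pbw_mon a b c d (sh1 i)"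
    using e_bc[of i] by (simp add: pbw_mon_def lam1_def Inl t)
  finally show ?thesis by (simp add: pbw_mon_def Inl t)
next
  case (Inr t)
  obtain k m n where t: "t = (k, m, n)" by (cases t) auto
  have "(b * c) * (d ^ Suc k * b ^ m * c ^ n) = ((b * c) * d ^ Suc k) * (b ^ m * c ^ n)" by (simp only: mult.assoc)
  also have "\<dots> = sc (of_real (inverse q ^ (2 * Suc k))) * (d ^ Suc k * ((b * c) * (b ^ m * c ^ n)))"
    by (subst bc_dpow) (simp only: scn2[OF S] mult.assoc)
  also have "\<dots> = sc (of_real (inverse q ^ (2 * Suc k))) * (d ^ Suc k * b ^ m * c ^ n * (b * c))"
    by (subst bc_bmcn) (simp only: mult.assoc)
  also have "\<dots> = sc (lam1 i) * pbw_mon a b c d (sh1 i)"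
    using e_bc[of i] by (simp add: pbw_mon_def lam1_def Inr t)
  finally show ?thesis by (simp add: pbw_mon_def Inr t)
qed

lemma bpow_a: "b ^ m * a = sc (of_real (q ^ m)) * (a * b ^ m)"
proof (induction m)
  case 0 then show ?case by (simp add: sc_1[OF S])
next
  case (Suc m)
  have "b ^ Suc m * a = b * (b ^ m * a)" by (simp only: power_Suc mult.assoc)
  also have "\<dots> = sc (of_real (q ^ m)) * ((b * a) * b ^ m)" by (simp only: Suc scn1[OF S] mult.assoc)
  also have "\<dots> = sc (of_real (q ^ m) * of_real q) * (a * (b * b ^ m))" by (simp only: ba scn2[OF S] scn3[OF S] mult.assoc)
  also have "\<dots> = sc (of_real (q ^ Suc m)) * (a * b ^ Suc m)" by (simp add: mult.commute)
  finally show ?case .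
qed

lemma cpow_a: "c ^ m * a = sc (of_real (q ^ m)) * (a * c ^ m)"
proof (induction m)
  case 0 then show ?case by (simp add: sc_1[OF S])
next
  case (Suc m)
  have "c ^ Suc m * a = c * (c ^ m * a)" by (simp only: power_Suc mult.assoc)
  also have "\<dots> = sc (of_real (q ^ m)) * ((c * a) * c ^ m)" by (simp only: Suc scn1[OF S] mult.assoc)
  also have "\<dots> = sc (of_real (q ^ m) * of_real q) * (a * (c * c ^ m))" by (simp only: ca scn2[OF S] scn3[OF S] mult.assoc)
  also have "\<dots> = sc (of_real (q ^ Suc m)) * (a * c ^ Suc m)" by (simp add: mult.commute)
  finally show ?case .
qed

lemma e0_ab: "pbw_mon a b c d (Inl (0, m, n)) * (a * b) = sc (of_real (q ^ (m + n))) * pbw_mon a b c d (sh2 (Inl (0, m, n)))"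
proof -
  have "b ^ m * c ^ n * (a * b) = b ^ m * (c ^ n * a) * b" by (simp only: mult.assoc)
  also have "\<dots> = sc (of_real (q ^ n)) * ((b ^ m * a) * (c ^ n * b))" by (simp only: cpow_a scn1[OF S] scn2[OF S] mult.assoc)
  also have "\<dots> = sc (of_real (q ^ n) * of_real (q ^ m)) * (a * (b ^ m * b) * c ^ n)" by (simp only: bpow_a b_cpow scn2[OF S] scn3[OF S] mult.assoc)
  also have "\<dots> = sc (of_real (q ^ (m + n))) * (a ^ 1 * b ^ Suc m * c ^ n)" by (simp add: power_add mult.commute power_Suc2 power_commutes)
  finally show ?thesis by (simp add: pbw_mon_def sh2_def)
qed

lemma ab_e0: "(a * b) * pbw_mon a b c d (Inl (0, m, n)) = pbw_mon a b c d (sh2 (Inl (0, m, n)))"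
  by (simp add: pbw_mon_def sh2_def mult.assoc)

lemma commutant:
  assumes c1: "(b * c) * x = x * (b * c)" and c2: "(a * b) * x = x * (a * b)"
  shows "\<exists>z. x = sc z"
proof -
  let ?e = "pbw_mon a b c d"
  obtain f where finS: "finite {i. f i \<noteq> 0}" and x: "x = (\<Sum>i\<in>{i. f i \<noteq> 0}. sc (f i) * ?e i)"
    using ex1_implies_ex[OF BAS[unfolded is_lin_basis_def, rule_format, of x]] by (elim exE conjE)
  define F where "F = {i. f i \<noteq> 0}"
  have fin: "finite F" using finS F_def by simp
  have x': "x = (\<Sum>i\<in>F. sc (f i) * ?e i)" using x F_def by simp
  have s1: "f i * lam1 i - f i * 1 = 0" if "i \<in> F" for i
    by (rule comm_sum[OF BAS fin inj_on_subset[OF inj_sh1 subset_UNIV] bc_e _ x' c1 that])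
       (simp only: e_bc sc_1[OF S] mult_1_left)
  have form: "\<exists>m n. i = Inl (0, m, n)" if "i \<in> F" for i
  proof -
    have fi: "f i \<noteq> 0" using that F_def by simp
    have l: "lam1 i = 1" using s1[OF that] fi by (simp add: right_diff_distrib[symmetric])
    show ?thesis
    proof (cases i)
      case (Inl t)
      obtain k m n where t: "t = (k, m, n)" by (cases t) auto
      have "q ^ (2 * k) = 1" using l by (simp add: lam1_def Inl t flip: of_real_power)
      then have "k = 0" using q0 q1 power_less_one_iff[of q "2 * k"] by (cases k) auto
      then show ?thesis using Inl t by simp
    next
      case (Inr t)
      obtain k m n where t: "t = (k, m, n)" by (cases t) auto
      have "inverse q ^ (2 * Suc k) = 1" using l by (simp add: lam1_def Inr t flip: of_real_power of_real_inverse of_real_mult)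
      moreover have "1 < inverse q" using q0 q1 by (simp add: one_less_inverse)
      ultimately have False using one_less_power[of "inverse q" "2 * Suc k"] by simp
      then show ?thesis ..
    qed
  qed
  define lam2 :: "(nat \<times> nat \<times> nat) + (nat \<times> nat \<times> nat) \<Rightarrow> complex"
    where "lam2 i = (case i of Inl (k, m, n) \<Rightarrow> (of_real (q ^ (m + n)) :: complex) | Inr t \<Rightarrow> 0)" for i
  have s2: "f i * 1 - f i * lam2 i = 0" if "i \<in> F" for i
  proof (rule comm_sum[OF BAS fin inj_on_subset[OF inj_sh2 subset_UNIV] _ _ x' c2 that])
    fix j assume "j \<in> F"
    then obtain m n where j: "j = Inl (0, m, n)" using form by blast
    show "a * b * ?e j = sc 1 * ?e (sh2 j)" using ab_e0 j by (simp add: sc_1[OF S])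
    show "?e j * (a * b) = sc (lam2 j) * ?e (sh2 j)" using e0_ab j by (simp add: lam2_def)
  qed
  have F0: "F \<subseteq> {Inl (0, 0, 0)}"
  proof
    fix i assume iF: "i \<in> F"
    then obtain m n where i: "i = Inl (0, m, n)" using form by blast
    have fi: "f i \<noteq> 0" using iF F_def by simp
    have "lam2 i = 1" using s2[OF iF] fi by (simp add: right_diff_distrib[symmetric])
    then have "q ^ (m + n) = 1" by (simp add: lam2_def i flip: of_real_power)
    then have "m + n = 0" using q0 q1 power_less_one_iff[of q "m + n"] by (cases "m + n") auto
    then show "i \<in> {Inl (0, 0, 0)}" using i by simp
  qed
  show ?thesis
  proof (cases "F = {}")
    case True then show ?thesis using x' sc_0[OF S] by auto
  next
    case False
    then have "F = {Inl (0, 0, 0)}" using F0 by blast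
    then have "x = sc (f (Inl (0, 0, 0)))" using x' by (simp add: pbw_mon_def)
    then show ?thesis ..
  qed
qed

end


lemma clin_add: "clinear_map sc L \<Longrightarrow> L (x + y) = L x + L y" by (simp add: clinear_map_def)
lemma clin_sc: "clinear_map sc L \<Longrightarrow> L (sc z * x) = sc z * L x" by (simp add: clinear_map_def)
lemma clin_0: "clinear_map sc L \<Longrightarrow> L 0 = 0"
  using clin_add[of sc L 0 0] by simp

lemma sum_K:
  fixes K D :: "'a::ring_1 \<Rightarrow> 'a"
  assumes S: "is_scalar_embedding sc" and cl: "clinear_map sc K"
    and mu: "\<And>x y. K (x * y) = K x * K y"
    and KB: "\<And>x. x \<in> B \<Longrightarrow> K x = x" and KD: "\<And>y. y \<in> B \<Longrightarrow> K (D y) = sc \<mu> * D y"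
  shows "set ps \<subseteq> B \<times> B \<Longrightarrow> K (\<Sum>(x, y)\<leftarrow>ps. x * D y) = sc \<mu> * (\<Sum>(x, y)\<leftarrow>ps. x * D y)"
proof (induction ps)
  case Nil then show ?case using clin_0[OF cl] by simp
next
  case (Cons p ps)
  obtain x y where p: "p = (x, y)" by (cases p) auto
  have xy: "x \<in> B" "y \<in> B" using Cons.prems p by auto
  have IH: "K (\<Sum>(x, y)\<leftarrow>ps. x * D y) = sc \<mu> * (\<Sum>(x, y)\<leftarrow>ps. x * D y)" using Cons by auto
  show ?case using IH xy
    by (simp add: p clin_add[OF cl] mu KB KD scn1[OF S, of x] distrib_left)
qed

theorem mainTheorem16:
  fixes q :: real and sc :: "complex \<Rightarrow> 'a::ring_1"
    and a b c d :: 'a and K Ki De Df :: "'a \<Rightarrow> 'a"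
  assumes "0 < q" and "q < 1"
    and "is_Oq_SU2 q sc a b c d"
    and "is_K_action (sqrt q) sc a b c d K"
    and "is_K_action (inverse (sqrt q)) sc a b c d Ki"
    and "is_partial_e sc a b c d K Ki De"
    and "is_partial_f sc a b c d K Ki Df"
  shows "bimod_centre (podles sc a b c d) (dirac_one_forms (podles sc a b c d) De Df) = {(0, 0)}"
proof -
  note q0 = assms(1) and q1 = assms(2) and O = assms(3)
  have S: "is_scalar_embedding sc" using O by (simp add: is_Oq_SU2_def)
  have BAS: "is_lin_basis sc (pbw_mon a b c d)" using O by (simp add: is_Oq_SU2_def)
  define \<sigma> :: complex where "\<sigma> = of_real (sqrt q)"
  have s0: "\<sigma> \<noteq> 0" using q0 by (simp add: \<sigma>_def)
  have ss: "\<sigma> * \<sigma> = of_real q" using q0 by (simp add: \<sigma>_def flip: of_real_mult)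
  have ssi: "of_real (inverse q) = inverse \<sigma> * inverse \<sigma>" using ss by (simp flip: ss)
  have KA: "clinear_map sc K" "\<And>x y. K (x * y) = K x * K y" "K 1 = 1"
    "K a = sc \<sigma> * a" "K b = sc (inverse \<sigma>) * b" "K c = sc \<sigma> * c" "K d = sc (inverse \<sigma>) * d"
    using assms(4) by (simp_all add: is_K_action_def \<sigma>_def)
  have KiA: "clinear_map sc Ki" "\<And>x y. Ki (x * y) = Ki x * Ki y" "Ki 1 = 1"
    "Ki a = sc (inverse \<sigma>) * a" "Ki b = sc \<sigma> * b" "Ki c = sc (inverse \<sigma>) * c" "Ki d = sc \<sigma> * d"
    using assms(5) by (simp_all add: is_K_action_def \<sigma>_def)
  have DeA: "clinear_map sc De" "\<And>x y. De (x * y) = De x * K y + Ki x * De y"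
    "De a = b" "De b = 0" "De c = d" "De d = 0"
    using assms(6) by (simp_all add: is_partial_e_def twisted_deriv_def)
  have DfA: "clinear_map sc Df" "\<And>x y. Df (x * y) = Df x * K y + Ki x * Df y"
    "Df a = 0" "Df b = a" "Df c = 0" "Df d = c"
    using assms(7) by (simp_all add: is_partial_f_def twisted_deriv_def)
  have K_sc: "K (sc z) = sc z" for z using clin_sc[OF KA(1), of z 1] KA(3) by simp
  have Ki_sc: "Ki (sc z) = sc z" for z using clin_sc[OF KiA(1), of z 1] KiA(3) by simp
  have De1: "De 1 = 0" using DeA(2)[of 1 1] KA(3) KiA(3) by simp
  have Df1: "Df 1 = 0" using DfA(2)[of 1 1] KA(3) KiA(3) by simp
  have De_sc: "De (sc z) = 0" for z using clin_sc[OF DeA(1), of z 1] De1 by simp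
  have Df_sc: "Df (sc z) = 0" for z using clin_sc[OF DfA(1), of z 1] Df1 by simp
  note scn = scn1[OF S, of a] scn1[OF S, of b] scn1[OF S, of c] scn1[OF S, of d] scn2[OF S] scn3[OF S]
  let ?B = "podles sc a b c d"
  have Bprop: "K v = v \<and> Ki v = v \<and> K (De v) = sc (inverse \<sigma> * inverse \<sigma>) * De v \<and> K (Df v) = sc (\<sigma> * \<sigma>) * Df v"
    if "v \<in> ?B" for v
    using that unfolding podles_def
  proof (induction rule: subalg_gen.induct)
    case (scal z)
    then show ?case using K_sc Ki_sc De_sc Df_sc clin_0[OF KA(1)] by simp
  next
    case (gen g)
    then consider "g = a * b" | "g = b * c" | "g = c * d" by blast
    then show ?case
    proof cases
      case 1 then show ?thesis using s0
        by (simp add: KA KiA DeA DfA scn clin_sc[OF KA(1)] K_sc Ki_sc sc_1[OF S] mult.assoc field_simps)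
    next
      case 2 then show ?thesis using s0
        by (simp add: KA KiA DeA DfA scn clin_sc[OF KA(1)] K_sc Ki_sc sc_1[OF S] mult.assoc field_simps)
    next
      case 3 then show ?thesis using s0
        by (simp add: KA KiA DeA DfA scn clin_sc[OF KA(1)] K_sc Ki_sc sc_1[OF S] mult.assoc field_simps)
    qed
  next
    case (add x y)
    then show ?case
      by (simp add: clin_add[OF KA(1)] clin_add[OF KiA(1)] clin_add[OF DeA(1)] clin_add[OF DfA(1)] distrib_left)
  next
    case (mult x y)
    then show ?case
      by (simp add: KA(2) KiA(2) DeA(2) DfA(2) clin_add[OF KA(1)] scn2[OF S] scn1[OF S, of x] distrib_left)
  qed
  have abB: "a * b \<in> ?B" and bcB: "b * c \<in> ?B" unfolding podles_def by (auto intro: subalg_gen.gen)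
  have one_ne: "\<sigma> * \<sigma> \<noteq> 1" using ss q1 by simp
  have zero_of: "z = 0" if h: "sc z = sc (\<mu> * z)" and mu: "\<mu> \<noteq> 1" for z \<mu>
  proof -
    have "sc (z - \<mu> * z) = 0" using h by (simp add: sc_diff[OF S])
    then have "z - \<mu> * z = 0" by (rule sc_inj0[OF S BAS])
    then have "(1 - \<mu>) * z = 0" by (simp add: algebra_simps)
    then show ?thesis using mu by simp
  qed
  show ?thesis
  proof
    show "{(0, 0)} \<subseteq> bimod_centre ?B (dirac_one_forms ?B De Df)"
    proof -
      have "(0, 0) \<in> dirac_one_forms ?B De Df"
        unfolding dirac_one_forms_def by (rule CollectI, rule exI[of _ "[]"]) simp
      then show ?thesis unfolding bimod_centre_def by simp
    qed
  next
    show "bimod_centre ?B (dirac_one_forms ?B De Df) \<subseteq> {(0, 0)}"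
    proof
      fix w assume w: "w \<in> bimod_centre ?B (dirac_one_forms ?B De Df)"
      then obtain ps where ps: "set ps \<subseteq> ?B \<times> ?B"
        and w1: "fst w = (\<Sum>(x, y)\<leftarrow>ps. x * De y)" and w2: "snd w = (\<Sum>(x, y)\<leftarrow>ps. x * Df y)"
        unfolding bimod_centre_def dirac_one_forms_def by auto
      have comm: "x * fst w = fst w * x" "x * snd w = snd w * x" if "x \<in> ?B" for x
        using w that unfolding bimod_centre_def by auto
      obtain z1 where z1: "fst w = sc z1" using commutant[OF O q0 q1 comm(1)[OF bcB] comm(1)[OF abB]] by blast
      obtain z2 where z2: "snd w = sc z2" using commutant[OF O q0 q1 comm(2)[OF bcB] comm(2)[OF abB]] by blast
      have K1: "K (fst w) = sc (inverse \<sigma> * inverse \<sigma>) * fst w"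
        unfolding w1 by (rule sum_K[OF S KA(1) KA(2)]) (use Bprop ps in auto)
      have K2: "K (snd w) = sc (\<sigma> * \<sigma>) * snd w"
        unfolding w2 by (rule sum_K[OF S KA(1) KA(2)]) (use Bprop ps in auto)
      have "sc z1 = sc ((inverse \<sigma> * inverse \<sigma>) * z1)" using K1 z1 K_sc by (simp add: sc_mult[OF S])
      moreover have "inverse \<sigma> * inverse \<sigma> \<noteq> 1"
      proof
        assume h: "inverse \<sigma> * inverse \<sigma> = 1"
        have "inverse (\<sigma> * \<sigma>) = 1" using h by (simp only: inverse_mult_distrib)
        then have "\<sigma> * \<sigma> = inverse 1" by (metis inverse_inverse_eq)
        then show False using one_ne by simp
      qed
      ultimately have "z1 = 0" by (rule zero_of)
      have "sc z2 = sc ((\<sigma> * \<sigma>) * z2)" using K2 z2 K_sc by (simp add: sc_mult[OF S])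
      then have "z2 = 0" using one_ne by (rule zero_of)
      show "w \<in> {(0, 0)}" using \<open>z1 = 0\<close> \<open>z2 = 0\<close> z1 z2 sc_0[OF S] by (cases w) simp
    qed
  qed
qed


end
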